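(* The maps $\psi_s : \mathbf{ASM}^\star \to \mathbb{K}(q)$ and $\psi_{s'} : \mathbf{ASM}^\star \to \mathbb{K}(q)$ linearly defined, for any $s \in \{\operatorname{io}, \operatorname{oi}\}$, any $s' \in \{\operatorname{se}, \operatorname{nw}, \operatorname{sw}, \operatorname{ne}\}$, and any ASM $\delta$ of size $n$ by $\psi_s(\mathbf{F}^\star_{M^\delta}) := \frac{q^{s(\delta)}}{n!}$ and $\psi_{s'}(\mathbf{F}^\star_{M^\delta}) := \frac{q^{s'(\delta)}}{[n]_q!}$ are algebra morphisms.
   Context: Let $\mathbb{K}$ be a field of characteristic zero; $[n]_q := 1 + q + \dots + q^{n-1}$, $[n]_q! := [1]_q \cdots [n]_q$, $[0]_q! := 1$. An alternating sign matrix (ASM) of size $n$ is an $n\times n$ matrix with entries in $\{0,+,-\}$ (read as $0,1,-1$) such that every row and column starts and ends (ignoring zeros) with $+$ and in each row and column the $+$ and $-$ alternate. For an ASM $\delta$, $M^\delta$ is the $\{0,1\}$-matrix with $M^\delta_{ij}=1$ iff $\delta_{ij}\neq 0$. $\mathbf{ASM}$ is the Hopf algebra spanned by the $\mathbf{F}_{M^\delta}$ (a Hopf subalgebra of the Hopf algebra of $1$-packed matrices, graded by size), and $\mathbf{ASM}^\star$ is its graded dual, with $(\mathbf{F}^\star_{M^\delta})$ the adjoint basis; its product is $\mathbf{F}^\star_{M_1}\cdot\mathbf{F}^\star_{M_2} = \sum \mathbf{F}^\star_M$ over all $M$ obtained by shuffling the rows of $[M_1 \mid 0_{n_1\times n_2}]$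 with the rows of $[0_{n_2\times n_1}\mid M_2]$, $n_i$ the sizes. Via the bijection between ASMs and six-vertex configurations with domain wall boundary conditions, $\operatorname{oi}(\delta)$ is the number of $+$ entries and $\operatorname{io}(\delta)$ the number of $-$ entries of $\delta$; zero entries correspond to the four vertex types $\operatorname{ne}$ (vertical edges pointing up, horizontal edges pointing right), $\operatorname{nw}$ (up, left), $\operatorname{se}$ (down, right), $\operatorname{sw}$ (down, left). Equivalently, for a zero entry $\delta_{ij}$, with $r = \sum_{j'<j}\delta_{ij'}$ and $c = \sum_{i'<i}\delta_{i'j}$, its type is $\operatorname{ne}$ if $(r,c)=(0,0)$, $\operatorname{nw}$ if $(1,0)$, $\operatorname{se}$ if $(0,1)$, $\operatorname{sw}$ if $(1,1)$; $s'(\delta)$ counts the zero entries of type $s'$. *)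

theory Defs
  imports "HOL-Computational_Algebra.Polynomial" "HOL-Computational_Algebra.Fraction_Field"
begin

text \<open>An n x n matrix with integer entries (0, 1, -1 read as 0, +, -), indices 0..n-1,
  entries outside the n x n square being 0.\<close>
type_synonym mat = "nat \<Rightarrow> nat \<Rightarrow> int"

definition alt_line :: "int list \<Rightarrow> bool" where
  "alt_line xs \<longleftrightarrow> (let ys = filter (\<lambda>x. x \<noteq> 0) xs in
     ys \<noteq> [] \<and> hd ys = 1 \<and> last ys = 1 \<and>
     (\<forall>k. Suc k < length ys \<longrightarrow> ys ! Suc k = - (ys ! k)))"

definition is_asm :: "nat \<Rightarrow> mat \<Rightarrow> bool" where
  "is_asm n d \<longleftrightarrow> (\<forall>i j. d i j \<in> {-1, 0, 1}) \<and>
     (\<forall>i j. n \<le> i \<or> n \<le> j \<longrightarrow> d i j = 0) \<and>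
     (\<forall>i<n. alt_line (map (\<lambda>j. d i j) [0..<n])) \<and>
     (\<forall>j<n. alt_line (map (\<lambda>i. d i j) [0..<n]))"

definition ASMs :: "(nat \<times> mat) set" where
  "ASMs = {(n, d). is_asm n d}"

definition asm_oi :: "nat \<Rightarrow> mat \<Rightarrow> nat" where
  "asm_oi n d = card {(i, j). i < n \<and> j < n \<and> d i j = 1}"

definition asm_io :: "nat \<Rightarrow> mat \<Rightarrow> nat" where
  "asm_io n d = card {(i, j). i < n \<and> j < n \<and> d i j = -1}"

definition row_pre :: "mat \<Rightarrow> nat \<Rightarrow> nat \<Rightarrow> int" where
  "row_pre d i j = (\<Sum>j'<j. d i j')"

definition col_pre :: "mat \<Rightarrow> nat \<Rightarrow> nat \<Rightarrow> int" where
  "col_pre d i j = (\<Sum>i'<i. d i' j)"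

definition zero_type :: "int \<Rightarrow> int \<Rightarrow> nat \<Rightarrow> mat \<Rightarrow> nat" where
  "zero_type r c n d = card {(i, j). i < n \<and> j < n \<and> d i j = 0 \<and>
       row_pre d i j = r \<and> col_pre d i j = c}"

definition asm_ne :: "nat \<Rightarrow> mat \<Rightarrow> nat" where "asm_ne = zero_type 0 0"
definition asm_nw :: "nat \<Rightarrow> mat \<Rightarrow> nat" where "asm_nw = zero_type 1 0"
definition asm_se :: "nat \<Rightarrow> mat \<Rightarrow> nat" where "asm_se = zero_type 0 1"
definition asm_sw :: "nat \<Rightarrow> mat \<Rightarrow> nat" where "asm_sw = zero_type 1 1"

text \<open>Shuffles: the set S of row positions receiving the rows of [M1 | 0] (in order);
  the remaining positions receive the rows of [0 | M2] (in order).\<close>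
definition shuffle_sets :: "nat \<Rightarrow> nat \<Rightarrow> nat set set" where
  "shuffle_sets n1 n2 = {S. S \<subseteq> {..<n1 + n2} \<and> card S = n1}"

definition shuffle_mat :: "nat \<Rightarrow> mat \<Rightarrow> mat \<Rightarrow> nat set \<Rightarrow> mat" where
  "shuffle_mat n1 d1 d2 S = (\<lambda>i j.
     if i \<in> S then (if j < n1 then d1 (card {k\<in>S. k < i}) j else 0)
     else (if n1 \<le> j then d2 (card {k. k < i \<and> k \<notin> S}) (j - n1) else 0))"

text \<open>Elements of ASM* over K: finitely supported coefficient functions on the
  basis (F*_{M^delta}) indexed by ASMs delta.\<close>
definition supp :: "(nat \<times> mat \<Rightarrow> 'a::zero) \<Rightarrow> (nat \<times> mat) set" where
  "supp x = {D. x D \<noteq> 0}"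

definition asm_dual :: "(nat \<times> mat \<Rightarrow> 'a::zero) \<Rightarrow> bool" where
  "asm_dual x \<longleftrightarrow> finite (supp x) \<and> supp x \<subseteq> ASMs"

text \<open>Product of ASM*: bilinear extension of
  F*_{M1} . F*_{M2} = sum over all shuffles of F*_M.\<close>
definition asm_mult :: "(nat \<times> mat \<Rightarrow> 'a::field) \<Rightarrow> (nat \<times> mat \<Rightarrow> 'a) \<Rightarrow> nat \<times> mat \<Rightarrow> 'a" where
  "asm_mult x y = (\<lambda>D. \<Sum>D1\<in>supp x. \<Sum>D2\<in>supp y. x D1 * y D2 *
      of_nat (card {S \<in> shuffle_sets (fst D1) (fst D2).
         (fst D1 + fst D2, shuffle_mat (fst D1) (snd D1) (snd D2) S) = D}))"

definition asm_unit :: "nat \<times> mat \<Rightarrow> 'a::{zero,one}" where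
  "asm_unit = (\<lambda>D. if D = (0, \<lambda>_ _. 0) then 1 else 0)"

text \<open>K(q) is modelled as the fraction field of K[q].\<close>
definition constK :: "'a::field \<Rightarrow> 'a poly fract" where
  "constK c = Fract [:c:] 1"

definition qvar :: "'a::field poly fract" where
  "qvar = Fract [:0, 1:] 1"

definition q_int :: "nat \<Rightarrow> 'a::field poly fract" where
  "q_int n = (\<Sum>i<n. qvar ^ i)"

definition q_fact :: "nat \<Rightarrow> 'a::field poly fract" where
  "q_fact n = (\<Prod>k\<in>{1..n}. q_int k)"

definition lin_ext :: "(nat \<times> mat \<Rightarrow> 'a::field poly fract) \<Rightarrow> (nat \<times> mat \<Rightarrow> 'a) \<Rightarrow> 'a poly fract" where
  "lin_ext phi x = (\<Sum>D\<in>supp x. constK (x D) * phi D)"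

definition asm_alg_morphism :: "((nat \<times> mat \<Rightarrow> 'a::field) \<Rightarrow> 'a poly fract) \<Rightarrow> bool" where
  "asm_alg_morphism f \<longleftrightarrow>
     f asm_unit = 1 \<and>
     (\<forall>x y. asm_dual x \<longrightarrow> asm_dual y \<longrightarrow>
        f (\<lambda>D. x D + y D) = f x + f y \<and> f (asm_mult x y) = f x * f y) \<and>
     (\<forall>c x. asm_dual x \<longrightarrow> f (\<lambda>D. c * x D) = constK c * f x)"

end

theory Submission
  imports Defs
begin


lemma constK_add: "constK (a + b) = constK a + constK b"
  unfolding constK_def by (simp add: eq_fract)
lemma constK_mult: "constK (a * b) = constK a * constK b"
  unfolding constK_def by (simp add: eq_fract)
lemma constK_0[simp]: "constK 0 = 0"
  unfolding constK_def by (simp add: Zero_fract_def)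
lemma constK_1[simp]: "constK 1 = 1"
  unfolding constK_def by (simp add: One_fract_def one_pCons)
lemma constK_sum: "constK (sum f A) = (\<Sum>x\<in>A. constK (f x))"
  by (induction A rule: infinite_finite_induct) (auto simp: constK_add)
lemma constK_of_nat: "constK (of_nat n) = of_nat n"
  by (induction n) (auto simp: constK_add)

lemma lin_ext_on:
  assumes "finite A" "supp x \<subseteq> A"
  shows "lin_ext phi x = (\<Sum>D\<in>A. constK (x D) * phi D)"
  unfolding lin_ext_def
  by (rule sum.mono_neutral_left) (use assms in \<open>auto simp: supp_def\<close>)

abbreviation shf :: "nat \<times> mat \<Rightarrow> nat \<times> mat \<Rightarrow> nat set \<Rightarrow> nat \<times> mat" where
  "shf D1 D2 S \<equiv> (fst D1 + fst D2, shuffle_mat (fst D1) (snd D1) (snd D2) S)"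

lemma finite_shuffle_sets: "finite (shuffle_sets n1 n2)"
  unfolding shuffle_sets_def
  by (rule finite_subset[of _ "Pow {..<n1+n2}"]) auto

lemma morphism_from_shuffle:
  fixes phi :: "nat \<times> mat \<Rightarrow> 'a::field poly fract"
  assumes unit: "phi (0, \<lambda>_ _. 0) = 1"
    and shuf: "\<And>D1 D2. D1 \<in> ASMs \<Longrightarrow> D2 \<in> ASMs \<Longrightarrow>
        (\<Sum>S\<in>shuffle_sets (fst D1) (fst D2). phi (shf D1 D2 S)) = phi D1 * phi D2"
  shows "asm_alg_morphism (lin_ext phi)"
  unfolding asm_alg_morphism_def
proof (intro conjI allI impI)
  have "supp (asm_unit :: nat \<times> mat \<Rightarrow> 'a) = {(0, \<lambda>_ _. 0)}"
    by (auto simp: supp_def asm_unit_def)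
  then show "lin_ext phi (asm_unit :: nat \<times> mat \<Rightarrow> 'a) = 1"
    by (simp add: lin_ext_def asm_unit_def unit)
next
  fix x y :: "nat \<times> mat \<Rightarrow> 'a"
  assume x: "asm_dual x" and y: "asm_dual y"
  have fx: "finite (supp x)" and fy: "finite (supp y)" using x y by (auto simp: asm_dual_def)
  have sub: "supp (\<lambda>D. x D + y D) \<subseteq> supp x \<union> supp y" by (auto simp: supp_def)
  show "lin_ext phi (\<lambda>D. x D + y D) = lin_ext phi x + lin_ext phi y"
    apply (subst lin_ext_on[OF _ sub], simp add: fx fy)
    apply (subst lin_ext_on[of "supp x \<union> supp y" x], simp add: fx fy, blast)
    apply (subst lin_ext_on[of "supp x \<union> supp y" y], simp add: fx fy, blast)
    by (simp add: constK_add distrib_right sum.distrib)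
  define A where "A = supp x"
  define B where "B = supp y"
  define T where "T = (\<Union>D1\<in>A. \<Union>D2\<in>B. shf D1 D2 ` shuffle_sets (fst D1) (fst D2))"
  have fA: "finite A" and fB: "finite B" using fx fy by (auto simp: A_def B_def)
  have AS: "A \<subseteq> ASMs" "B \<subseteq> ASMs" using x y by (auto simp: asm_dual_def A_def B_def)
  have fT: "finite T" unfolding T_def using fA fB finite_shuffle_sets by auto
  have subT: "supp (asm_mult x y) \<subseteq> T"
  proof
    fix D assume "D \<in> supp (asm_mult x y)"
    then have "asm_mult x y D \<noteq> 0" by (simp add: supp_def)
    then obtain D1 where D1: "D1 \<in> A" and
      ne1: "(\<Sum>D2\<in>supp y. x D1 * y D2 * of_nat (card {S \<in> shuffle_sets (fst D1) (fst D2). shf D1 D2 S = D})) \<noteq> 0"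
      unfolding asm_mult_def A_def by (meson sum.not_neutral_contains_not_neutral)
    then obtain D2 where D2: "D2 \<in> B" and
      ne2: "x D1 * y D2 * of_nat (card {S \<in> shuffle_sets (fst D1) (fst D2). shf D1 D2 S = D}) \<noteq> 0"
      unfolding B_def by (meson sum.not_neutral_contains_not_neutral)
    have d: "D1 \<in> A" "D2 \<in> B" "card {S \<in> shuffle_sets (fst D1) (fst D2). shf D1 D2 S = D} \<noteq> 0"
      apply (rule D1) apply (rule D2) using ne2 by (metis of_nat_0 mult_zero_right)
    then obtain S where "S \<in> shuffle_sets (fst D1) (fst D2)" "shf D1 D2 S = D"
      by (metis (mono_tags, lifting) card.empty empty_Collect_eq)
    then show "D \<in> T" unfolding T_def using d by blast
  qed
  have grp: "(\<Sum>D\<in>T. of_nat (card {S \<in> shuffle_sets (fst D1) (fst D2). shf D1 D2 S = D}) * phi D)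
       = phi D1 * phi D2" if "D1 \<in> A" "D2 \<in> B" for D1 D2
  proof -
    have img: "shf D1 D2 ` shuffle_sets (fst D1) (fst D2) \<subseteq> T"
      unfolding T_def using that by blast
    have "(\<Sum>D\<in>T. of_nat (card {S \<in> shuffle_sets (fst D1) (fst D2). shf D1 D2 S = D}) * phi D)
        = (\<Sum>D\<in>T. \<Sum>S\<in>{S \<in> shuffle_sets (fst D1) (fst D2). shf D1 D2 S = D}. phi (shf D1 D2 S))"
      by (rule sum.cong) auto
    also have "\<dots> = (\<Sum>S\<in>shuffle_sets (fst D1) (fst D2). phi (shf D1 D2 S))"
      by (rule sum.group[OF finite_shuffle_sets fT img])
    also have "\<dots> = phi D1 * phi D2" using shuf that AS by blast
    finally show ?thesis .
  qed
  have "lin_ext phi (asm_mult x y) = (\<Sum>D\<in>T. constK (asm_mult x y D) * phi D)"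
    by (rule lin_ext_on[OF fT subT])
  also have "\<dots> = (\<Sum>D\<in>T. \<Sum>D1\<in>A. \<Sum>D2\<in>B. constK (x D1) * constK (y D2) *
        (of_nat (card {S \<in> shuffle_sets (fst D1) (fst D2). shf D1 D2 S = D}) * phi D))"
    unfolding asm_mult_def A_def B_def
    by (simp add: constK_sum constK_mult constK_of_nat sum_distrib_right mult.assoc)
  also have "\<dots> = (\<Sum>D1\<in>A. \<Sum>D2\<in>B. constK (x D1) * constK (y D2) *
        (\<Sum>D\<in>T. of_nat (card {S \<in> shuffle_sets (fst D1) (fst D2). shf D1 D2 S = D}) * phi D))"
    apply (subst sum.swap[of _ _ T])
    apply (rule sum.cong[OF refl])
    apply (subst sum.swap[of _ _ T])
    by (simp add: sum_distrib_left)
  also have "\<dots> = (\<Sum>D1\<in>A. \<Sum>D2\<in>B. (constK (x D1) * phi D1) * (constK (y D2) * phi D2))"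
    apply (intro sum.cong refl)
    subgoal for D1 D2 by (simp only: grp) (simp add: mult_ac)
    done
  also have "\<dots> = lin_ext phi x * lin_ext phi y"
    unfolding lin_ext_def A_def B_def by (simp add: sum_product)
  finally show "lin_ext phi (asm_mult x y) = lin_ext phi x * lin_ext phi y" .
next
  fix c :: 'a and x :: "nat \<times> mat \<Rightarrow> 'a"
  assume x: "asm_dual x"
  have fx: "finite (supp x)" using x by (auto simp: asm_dual_def)
  have sub: "supp (\<lambda>D. c * x D) \<subseteq> supp x" by (auto simp: supp_def)
  show "lin_ext phi (\<lambda>D. c * x D) = constK c * lin_ext phi x"
    apply (subst lin_ext_on[OF fx sub])
    by (simp add: lin_ext_def constK_mult sum_distrib_left mult.assoc)
qed



lemma sum_list_filter_nz: "sum_list (filter (\<lambda>x::int. x \<noteq> 0) xs) = sum_list xs"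
  by (induction xs) auto

lemma alt_nth:
  assumes "\<forall>k. Suc k < length ys \<longrightarrow> ys ! Suc k = - (ys ! k)" "ys \<noteq> []" "hd ys = (1::int)"
  shows "k < length ys \<Longrightarrow> ys ! k = (-1) ^ k"
proof (induction k)
  case 0 then show ?case using assms by (simp add: hd_conv_nth)
next
  case (Suc k) then show ?case using assms(1) by auto
qed

lemma sum_alt: "(\<Sum>k<n. (-1::int) ^ k) = (if even n then 0 else 1)"
  by (induction n) auto

lemma sum_list_take_alt:
  assumes "\<forall>k. Suc k < length ys \<longrightarrow> ys ! Suc k = - (ys ! k)" "ys \<noteq> []" "hd ys = (1::int)"
  shows "sum_list (take m ys) = (if even (min m (length ys)) then 0 else 1)"
proof -
  have "sum_list (take m ys) = (\<Sum>k = 0..<min m (length ys). ys ! k)"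
    by (simp add: sum_list_sum_nth min.commute)
  also have "\<dots> = (\<Sum>k<min m (length ys). (-1) ^ k)"
    using alt_nth[OF assms] by (simp add: atLeast0LessThan)
  finally show ?thesis by (simp add: sum_alt min.commute)
qed

lemma alt_line_props:
  assumes "alt_line xs"
  shows "sum_list (take m xs) \<in> {0, 1}" and "sum_list xs = 1"
proof -
  define ys where "ys = filter (\<lambda>x. x \<noteq> 0) xs"
  have A: "\<forall>k. Suc k < length ys \<longrightarrow> ys ! Suc k = - (ys ! k)" "ys \<noteq> []" "hd ys = 1"
    and L: "last ys = 1"
    using assms unfolding alt_line_def ys_def Let_def by auto
  have "filter (\<lambda>x. x \<noteq> 0) (take m xs) = take (length (filter (\<lambda>x. x \<noteq> 0) (take m xs))) ys"
  proof -
    have "ys = filter (\<lambda>x. x \<noteq> 0) (take m xs) @ filter (\<lambda>x. x \<noteq> 0) (drop m xs)"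
      unfolding ys_def by (metis append_take_drop_id filter_append)
    then show ?thesis by (metis append_eq_conv_conj)
  qed
  then have "sum_list (take m xs) = sum_list (take (length (filter (\<lambda>x. x \<noteq> 0) (take m xs))) ys)"
    by (metis sum_list_filter_nz)
  then show "sum_list (take m xs) \<in> {0, 1}"
    using sum_list_take_alt[OF A] by simp
  have "last ys = ys ! (length ys - 1)" using A(2) by (simp add: last_conv_nth)
  also have "\<dots> = (-1) ^ (length ys - 1)" using alt_nth[OF A] A(2) by simp
  finally have "even (length ys - 1)" using L by (simp add: minus_one_power_iff split: if_splits)
  then have "odd (length ys)" using A(2)
    by (metis One_nat_def Suc_pred even_Suc length_greater_0_conv)
  then have "sum_list ys = 1" using sum_list_take_alt[OF A, of "length ys"] by simp
  then show "sum_list xs = 1" unfolding ys_def by (simp add: sum_list_filter_nz)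
qed

lemma asm_row_sum:
  assumes "is_asm n d" "i < n"
  shows "(\<Sum>j<n. d i j) = 1"
proof -
  have "alt_line (map (\<lambda>j. d i j) [0..<n])" using assms unfolding is_asm_def by auto
  from alt_line_props(2)[OF this] show ?thesis
    by (simp add: sum_list_sum_nth atLeast0LessThan)
qed

lemma asm_col_pre01:
  assumes "is_asm n d" "j < n" "k \<le> n"
  shows "col_pre d k j \<in> {0, 1}"
proof -
  have "alt_line (map (\<lambda>i. d i j) [0..<n])" using assms unfolding is_asm_def by auto
  from alt_line_props(1)[OF this, of k] have "sum_list (map (\<lambda>i. d i j) [0..<k]) \<in> {0,1}"
    using assms(3) by (simp add: take_map)
  then show ?thesis unfolding col_pre_def
    by (simp add: sum_list_sum_nth atLeast0LessThan)
qed

lemma asm_col_pre_sum: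
  assumes "is_asm n d" "k \<le> n"
  shows "(\<Sum>j<n. col_pre d k j) = int k"
proof -
  have "(\<Sum>j<n. col_pre d k j) = (\<Sum>i<k. \<Sum>j<n. d i j)"
    unfolding col_pre_def by (rule sum.swap)
  also have "\<dots> = (\<Sum>i<k. 1)" using asm_row_sum[OF assms(1)] assms(2) by simp
  finally show ?thesis by simp
qed

lemma asm_count_col1:
  assumes "is_asm n d" "k \<le> n"
  shows "(\<Sum>j<n. if col_pre d k j = 1 then 1 else 0) = k"
    and "(\<Sum>j<n. if col_pre d k j = 0 then 1 else 0) = n - k"
proof -
  have "int (\<Sum>j<n. if col_pre d k j = 1 then 1 else 0) = (\<Sum>j<n. col_pre d k j)"
    unfolding of_nat_sum
    by (rule sum.cong) (use asm_col_pre01[OF assms(1) _ assms(2)] in auto)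
  then show 1: "(\<Sum>j<n. if col_pre d k j = 1 then 1 else 0) = k"
    using asm_col_pre_sum[OF assms] by (metis of_nat_eq_iff)
  have "(\<Sum>j<n. if col_pre d k j = 0 then 1 else 0) + (\<Sum>j<n. if col_pre d k j = 1 then 1 else 0)
     = (\<Sum>j<n. 1::nat)"
    unfolding sum.distrib[symmetric]
    by (rule sum.cong) (use asm_col_pre01[OF assms(1) _ assms(2)] in auto)
  then show "(\<Sum>j<n. if col_pre d k j = 0 then 1 else 0) = n - k" using 1 by simp
qed



definition ra :: "nat set \<Rightarrow> nat \<Rightarrow> nat" where "ra S i = card {k\<in>S. k < i}"
definition rb :: "nat set \<Rightarrow> nat \<Rightarrow> nat" where "rb S i = card {k. k < i \<and> k \<notin> S}"

lemma ra_0[simp]: "ra S 0 = 0" by (simp add: ra_def)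
lemma rb_0[simp]: "rb S 0 = 0" by (simp add: rb_def)

lemma ra_Suc: "ra S (Suc i) = ra S i + (if i \<in> S then 1 else 0)"
proof -
  have e: "{k\<in>S. k < Suc i} = (if i \<in> S then insert i {k\<in>S. k < i} else {k\<in>S. k < i})"
    by (auto simp: less_Suc_eq)
  have f: "finite {k\<in>S. k < i}" by simp
  show ?thesis unfolding ra_def e using f by (auto simp: card_insert_if)
qed

lemma rb_Suc: "rb S (Suc i) = rb S i + (if i \<in> S then 0 else 1)"
proof -
  have e: "{k. k < Suc i \<and> k \<notin> S} = (if i \<in> S then {k. k < i \<and> k \<notin> S} else insert i {k. k < i \<and> k \<notin> S})"
    by (auto simp: less_Suc_eq)
  have f: "finite {k. k < i \<and> k \<notin> S}" by simp
  show ?thesis unfolding rb_def e using f by (auto simp: card_insert_if)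
qed

lemma ra_rb: "ra S i + rb S i = i"
  by (induction i) (auto simp: ra_Suc rb_Suc)

lemma ra_mono: "i \<le> j \<Longrightarrow> ra S i \<le> ra S j"
  unfolding ra_def by (rule card_mono) auto

lemma rb_mono: "i \<le> j \<Longrightarrow> rb S i \<le> rb S j"
  unfolding rb_def by (rule card_mono) auto

lemma ra_full: "S \<subseteq> {..<M} \<Longrightarrow> ra S M = card S"
  unfolding ra_def by (rule arg_cong[where f=card]) auto

lemma rb_full: "S \<subseteq> {..<M} \<Longrightarrow> rb S M = M - card S"
  using ra_rb[of S M] ra_full[of S M] by simp

lemma shuffle_mat_eq: "shuffle_mat n1 d1 d2 S i j =
   (if i \<in> S then (if j < n1 then d1 (ra S i) j else 0)
    else (if n1 \<le> j then d2 (rb S i) (j - n1) else 0))"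
  unfolding shuffle_mat_def ra_def rb_def by simp

lemma col_pre_Suc: "col_pre d (Suc i) j = col_pre d i j + d i j"
  unfolding col_pre_def by simp

lemma row_pre_Suc: "row_pre d i (Suc j) = row_pre d i j + d i j"
  unfolding row_pre_def by simp

lemma colpre_shuf1:
  "j < n1 \<Longrightarrow> col_pre (shuffle_mat n1 d1 d2 S) i j = col_pre d1 (ra S i) j"
proof (induction i)
  case 0 then show ?case by (simp add: col_pre_def)
next
  case (Suc i) then show ?case
    by (simp add: col_pre_Suc ra_Suc shuffle_mat_eq)
qed

lemma colpre_shuf2:
  "col_pre (shuffle_mat n1 d1 d2 S) i (n1 + j) = col_pre d2 (rb S i) j"
proof (induction i)
  case 0 then show ?case by (simp add: col_pre_def)
next
  case (Suc i) then show ?case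
    by (simp add: col_pre_Suc rb_Suc shuffle_mat_eq)
qed

lemma rowpre_shuf1:
  "j \<le> n1 \<Longrightarrow> row_pre (shuffle_mat n1 d1 d2 S) i j = (if i \<in> S then row_pre d1 (ra S i) j else 0)"
proof (induction j)
  case 0 then show ?case by (simp add: row_pre_def)
next
  case (Suc j) then show ?case
    by (simp add: row_pre_Suc shuffle_mat_eq)
qed

lemma rowpre_shuf2:
  "row_pre (shuffle_mat n1 d1 d2 S) i (n1 + j) =
     (if i \<in> S then row_pre d1 (ra S i) n1 else row_pre d2 (rb S i) j)"
proof (induction j)
  case 0 then show ?case using rowpre_shuf1[of n1 n1 d1 d2 S i] by (simp add: row_pre_def)
next
  case (Suc j) then show ?case
    by (simp add: row_pre_Suc shuffle_mat_eq)
qed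

definition stp :: "(int \<Rightarrow> int \<Rightarrow> int \<Rightarrow> bool) \<Rightarrow> nat \<Rightarrow> mat \<Rightarrow> nat" where
  "stp P n d = (\<Sum>i<n. \<Sum>j<n. if P (d i j) (row_pre d i j) (col_pre d i j) then 1 else 0)"

lemma card_lt_if: "card {j. j < (n::nat) \<and> Q j} = (\<Sum>j<n. if Q j then 1 else 0)"
proof -
  have "card {j. j < n \<and> Q j} = card {j\<in>{..<n}. Q j}" by (rule arg_cong[where f=card]) auto
  also have "\<dots> = (\<Sum>j\<in>{j\<in>{..<n}. Q j}. 1)" by simp
  also have "\<dots> = (\<Sum>j<n. if Q j then 1 else 0)" using sum.inter_filter[of "{..<n}" "\<lambda>_. 1::nat" Q] by simp
  finally show ?thesis .
qed

lemma card_pairs: "card {(i, j). i < (n::nat) \<and> j < n \<and> Q i j} = (\<Sum>i<n. \<Sum>j<n. if Q i j then 1 else 0)"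
proof -
  have "{(i, j). i < n \<and> j < n \<and> Q i j} = (SIGMA i:{..<n}. {j. j < n \<and> Q i j})" by auto
  then show ?thesis by (simp only:) (subst card_SigmaI, auto simp: card_lt_if)
qed

lemma stat_defs:
  "asm_oi n d = stp (\<lambda>v r c. v = 1) n d"
  "asm_io n d = stp (\<lambda>v r c. v = -1) n d"
  "zero_type r0 c0 n d = stp (\<lambda>v r c. v = 0 \<and> r = r0 \<and> c = c0) n d"
  unfolding asm_oi_def asm_io_def zero_type_def stp_def card_pairs by simp_all

lemma sum_split_add: "(\<Sum>j<(n1::nat)+n2. f j) = (\<Sum>j<n1. f j) + (\<Sum>j<n2. f (n1 + j))"
  by (induction n2) (auto simp: add.assoc)

lemma rank_split:
  fixes f g h e :: "nat \<Rightarrow> nat"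
  shows "(\<Sum>i<m. if i \<in> S then f (ra S i) + g (rb S i) else h (ra S i) + e (rb S i))
   = (\<Sum>k<ra S m. f k) + (\<Sum>k<rb S m. e k) + (\<Sum>i<m. if i \<in> S then g (rb S i) else h (ra S i))"
  by (induction m) (auto simp: ra_Suc rb_Suc)



lemma ra_lt_n1:
  assumes "S \<subseteq> {..<N}" "i \<in> S" "i < N"
  shows "ra S i < card S"
proof -
  have "ra S (Suc i) \<le> ra S N" using assms by (intro ra_mono) simp
  then show ?thesis using assms ra_full[of S N] by (simp add: ra_Suc)
qed

lemma stp_shuffle:
  assumes S: "S \<subseteq> {..<n1+n2}" "card S = n1" and A1: "is_asm n1 d1" and A2: "is_asm n2 d2"
  shows "stp P (n1+n2) (shuffle_mat n1 d1 d2 S) = stp P n1 d1 + stp P n2 d2 +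
     (\<Sum>i<n1+n2. if i \<in> S then (\<Sum>j<n2. if P 0 1 (col_pre d2 (rb S i) j) then 1 else 0)
                   else (\<Sum>j<n1. if P 0 0 (col_pre d1 (ra S i) j) then 1 else 0))"
proof -
  define M where "M = shuffle_mat n1 d1 d2 S"
  define g where "g i j = (if P (M i j) (row_pre M i j) (col_pre M i j) then 1 else (0::nat))" for i j
  define T1 where "T1 k = (\<Sum>j<n1. if P (d1 k j) (row_pre d1 k j) (col_pre d1 k j) then 1 else (0::nat))" for k
  define T2 where "T2 k = (\<Sum>j<n2. if P (d2 k j) (row_pre d2 k j) (col_pre d2 k j) then 1 else (0::nat))" for k
  define X1 where "X1 k = (\<Sum>j<n1. if P 0 0 (col_pre d1 k j) then 1 else (0::nat))" for k
  define X2 where "X2 k = (\<Sum>j<n2. if P 0 1 (col_pre d2 k j) then 1 else (0::nat))" for k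
  have row: "(\<Sum>j<n1+n2. g i j) = (if i \<in> S then T1 (ra S i) + X2 (rb S i) else X1 (ra S i) + T2 (rb S i))"
    if i: "i < n1 + n2" for i
  proof (cases "i \<in> S")
    case True
    have r1: "ra S i < n1" using ra_lt_n1[OF S(1) True i] S(2) by simp
    have a: "(\<Sum>j<n1. g i j) = T1 (ra S i)"
      unfolding T1_def g_def M_def
      by (rule sum.cong) (auto simp: True shuffle_mat_eq rowpre_shuf1 colpre_shuf1)
    have rs: "row_pre d1 (ra S i) n1 = 1"
      using asm_row_sum[OF A1 r1] by (simp add: row_pre_def)
    have b: "(\<Sum>j<n2. g i (n1 + j)) = X2 (rb S i)"
      unfolding X2_def g_def M_def
      by (rule sum.cong) (auto simp: True shuffle_mat_eq rowpre_shuf2 colpre_shuf2 rs)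
    show ?thesis using a b True by (simp add: sum_split_add)
  next
    case False
    have a: "(\<Sum>j<n1. g i j) = X1 (ra S i)"
      unfolding X1_def g_def M_def
      by (rule sum.cong) (auto simp: False shuffle_mat_eq rowpre_shuf1 colpre_shuf1)
    have b: "(\<Sum>j<n2. g i (n1 + j)) = T2 (rb S i)"
      unfolding T2_def g_def M_def
      by (rule sum.cong) (auto simp: False shuffle_mat_eq rowpre_shuf2 colpre_shuf2)
    show ?thesis using a b False by (simp add: sum_split_add)
  qed
  have "stp P (n1+n2) M = (\<Sum>i<n1+n2. \<Sum>j<n1+n2. g i j)"
    unfolding stp_def g_def ..
  also have "\<dots> = (\<Sum>i<n1+n2. if i \<in> S then T1 (ra S i) + X2 (rb S i) else X1 (ra S i) + T2 (rb S i))"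
    by (rule sum.cong) (simp_all add: row)
  also have "\<dots> = (\<Sum>k<ra S (n1+n2). T1 k) + (\<Sum>k<rb S (n1+n2). T2 k) +
      (\<Sum>i<n1+n2. if i \<in> S then X2 (rb S i) else X1 (ra S i))"
    by (rule rank_split)
  also have "\<dots> = stp P n1 d1 + stp P n2 d2 + (\<Sum>i<n1+n2. if i \<in> S then X2 (rb S i) else X1 (ra S i))"
    using ra_full[OF S(1)] rb_full[OF S(1)] S(2) unfolding stp_def T1_def T2_def by simp
  finally show ?thesis unfolding M_def X1_def X2_def .
qed



lemma cnt_notS: "(\<Sum>i<m. if i \<in> S then 0 else 1) = rb S m"
  by (induction m) (auto simp: rb_Suc)
lemma cnt_S: "(\<Sum>i<m. if i \<in> S then 1 else 0) = ra S m"
  by (induction m) (auto simp: ra_Suc)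

definition EA :: "nat set \<Rightarrow> nat \<Rightarrow> nat" where
  "EA S m = (\<Sum>i<m. if i \<in> S then 0 else ra S i)"
definition EB :: "nat set \<Rightarrow> nat \<Rightarrow> nat" where
  "EB S m = (\<Sum>i<m. if i \<in> S then rb S i else 0)"

lemma L1: "(\<Sum>i<m. if i \<in> S then 0 else ra S m - ra S i) = EB S m"
proof (induction m)
  case 0 then show ?case by (simp add: EB_def)
next
  case (Suc m)
  show ?case
  proof (cases "m \<in> S")
    case True
    have "(\<Sum>i<m. if i \<in> S then 0 else ra S (Suc m) - ra S i)
        = (\<Sum>i<m. (if i \<in> S then 0 else ra S m - ra S i) + (if i \<in> S then 0 else 1))"
      by (rule sum.cong) (auto simp: True ra_Suc Suc_diff_le ra_mono)
    also have "\<dots> = EB S m + rb S m" by (simp add: sum.distrib Suc.IH cnt_notS)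
    finally show ?thesis using True by (simp add: EB_def)
  next
    case False
    have "(\<Sum>i<m. if i \<in> S then 0 else ra S (Suc m) - ra S i)
        = (\<Sum>i<m. if i \<in> S then 0 else ra S m - ra S i)"
      by (rule sum.cong) (auto simp: False ra_Suc)
    then show ?thesis using False Suc.IH by (simp add: EB_def ra_Suc)
  qed
qed

lemma L2: "(\<Sum>i<m. if i \<in> S then rb S m - rb S i else 0) = EA S m"
proof (induction m)
  case 0 then show ?case by (simp add: EA_def)
next
  case (Suc m)
  show ?case
  proof (cases "m \<in> S")
    case False
    have "(\<Sum>i<m. if i \<in> S then rb S (Suc m) - rb S i else 0)
        = (\<Sum>i<m. (if i \<in> S then rb S m - rb S i else 0) + (if i \<in> S then 1 else 0))"
      by (rule sum.cong) (auto simp: False rb_Suc Suc_diff_le rb_mono)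
    also have "\<dots> = EA S m + ra S m" by (simp add: sum.distrib Suc.IH cnt_S)
    finally show ?thesis using False by (simp add: EA_def)
  next
    case True
    have "(\<Sum>i<m. if i \<in> S then rb S (Suc m) - rb S i else 0)
        = (\<Sum>i<m. if i \<in> S then rb S m - rb S i else 0)"
      by (rule sum.cong) (auto simp: True rb_Suc)
    then show ?thesis using True Suc.IH by (simp add: EA_def rb_Suc)
  qed
qed

definition Sets :: "nat \<Rightarrow> nat \<Rightarrow> nat set set" where
  "Sets M k = {S. S \<subseteq> {..<M} \<and> card S = k}"

lemma finite_Sets: "finite (Sets M k)"
  unfolding Sets_def by (rule finite_subset[of _ "Pow {..<M}"]) auto

lemma Sets_0: "Sets M 0 = {{}}"
  unfolding Sets_def by (auto dest: finite_subset)

lemma Sets_full: "Sets M M = {{..<M}}"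
  unfolding Sets_def using card_subset_eq[of "{..<M}"] by auto

lemma Sets_Suc: "Sets (Suc M) (Suc k) = insert M ` Sets M k \<union> Sets M (Suc k)"
proof
  show "Sets (Suc M) (Suc k) \<subseteq> insert M ` Sets M k \<union> Sets M (Suc k)"
  proof
    fix S assume S: "S \<in> Sets (Suc M) (Suc k)"
    then have sub: "S \<subseteq> {..<Suc M}" and c: "card S = Suc k" by (auto simp: Sets_def)
    have fin: "finite S" using sub finite_subset by blast
    show "S \<in> insert M ` Sets M k \<union> Sets M (Suc k)"
    proof (cases "M \<in> S")
      case True
      have "S - {M} \<in> Sets M k" using sub c fin True
        by (auto simp: Sets_def less_Suc_eq)
      moreover have "S = insert M (S - {M})" using True by auto
      ultimately show ?thesis by blast
    next
      case False
      then have "S \<in> Sets M (Suc k)" using sub c by (auto simp: Sets_def less_Suc_eq)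
      then show ?thesis by blast
    qed
  qed
next
  show "insert M ` Sets M k \<union> Sets M (Suc k) \<subseteq> Sets (Suc M) (Suc k)"
  proof
    fix S assume "S \<in> insert M ` Sets M k \<union> Sets M (Suc k)"
    then show "S \<in> Sets (Suc M) (Suc k)"
    proof
      assume "S \<in> insert M ` Sets M k"
      then obtain T where T: "T \<in> Sets M k" "S = insert M T" by blast
      then have "M \<notin> T" "finite T" by (auto simp: Sets_def dest: finite_subset)
      then show ?thesis using T by (auto simp: Sets_def)
    next
      assume "S \<in> Sets M (Suc k)" then show ?thesis by (auto simp: Sets_def)
    qed
  qed
qed

lemma sum_Sets_Suc:
  "(\<Sum>S\<in>Sets (Suc M) (Suc k). F S) = (\<Sum>S\<in>Sets M k. F (insert M S)) + (\<Sum>S\<in>Sets M (Suc k). F S)"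
proof -
  have disj: "insert M ` Sets M k \<inter> Sets M (Suc k) = {}" by (auto simp: Sets_def)
  have inj: "inj_on (insert M) (Sets M k)"
  proof (rule inj_onI)
    fix x y assume a: "x \<in> Sets M k" "y \<in> Sets M k" "insert M x = insert M y"
    then have "M \<notin> x" "M \<notin> y" by (auto simp: Sets_def)
    then show "x = y" using a(3) by (metis Diff_insert_absorb)
  qed
  show ?thesis unfolding Sets_Suc
    by (subst sum.union_disjoint) (auto simp: finite_Sets disj sum.reindex[OF inj])
qed

lemma ra_insert: "i \<le> M \<Longrightarrow> ra (insert M S) i = ra S i"
  unfolding ra_def by (rule arg_cong[where f=card]) auto
lemma rb_insert: "i \<le> M \<Longrightarrow> rb (insert M S) i = rb S i"
  unfolding rb_def by (rule arg_cong[where f=card]) auto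

lemma EA_insert: "EA (insert M S) (Suc M) = EA S M"
  unfolding EA_def by (auto simp: ra_insert intro!: sum.cong)
lemma EB_insert: "EB (insert M S) (Suc M) = EB S M + rb S M"
  unfolding EB_def by (auto simp: rb_insert intro!: sum.cong)
lemma EA_Suc: "M \<notin> S \<Longrightarrow> EA S (Suc M) = EA S M + ra S M"
  unfolding EA_def by simp
lemma EB_Suc: "M \<notin> S \<Longrightarrow> EB S (Suc M) = EB S M"
  unfolding EB_def by simp

lemma q_int_add: "q_int (a + b) = q_int a + qvar ^ a * q_int b"
  unfolding q_int_def by (simp add: sum_split_add power_add sum_distrib_left)
lemma q_fact_Suc: "q_fact (Suc n) = q_fact n * q_int (Suc n)"
  unfolding q_fact_def by (simp add: atLeastAtMostSuc_conv mult.commute)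
lemma q_fact_0[simp]: "q_fact 0 = 1"
  unfolding q_fact_def by simp

lemma GF_A: "(\<Sum>S\<in>Sets (n1+n2) n1. (qvar::'a::field poly fract) ^ EA S (n1+n2)) * q_fact n1 * q_fact n2
   = q_fact (n1+n2)"
proof (induction n1 arbitrary: n2)
  case 0
  show ?case by (simp add: Sets_0 EA_def ra_def)
next
  case (Suc k)
  note outer = Suc.IH
  show ?case
  proof (induction n2)
    case 0
    show ?case by (simp add: Sets_full EA_def)
  next
    case (Suc l)
    define M where "M = k + Suc l"
    have M1: "Suc k + Suc l = Suc M" and M2: "Suc k + l = M" unfolding M_def by simp_all
    have "(\<Sum>S\<in>Sets (Suc k + Suc l) (Suc k). (qvar::'a poly fract) ^ EA S (Suc k + Suc l))
      = (\<Sum>S\<in>Sets M k. qvar ^ EA S M) + qvar ^ Suc k * (\<Sum>S\<in>Sets M (Suc k). qvar ^ EA S M)"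
    proof -
      have a: "(\<Sum>S\<in>Sets M k. (qvar::'a poly fract) ^ EA (insert M S) (Suc M)) = (\<Sum>S\<in>Sets M k. qvar ^ EA S M)"
        by (simp add: EA_insert)
      have b: "(\<Sum>S\<in>Sets M (Suc k). (qvar::'a poly fract) ^ EA S (Suc M))
          = qvar ^ Suc k * (\<Sum>S\<in>Sets M (Suc k). qvar ^ EA S M)"
        unfolding sum_distrib_left
      proof (rule sum.cong[OF refl])
        fix S assume "S \<in> Sets M (Suc k)"
        then have s: "S \<subseteq> {..<M}" "card S = Suc k" by (auto simp: Sets_def)
        then have "M \<notin> S" by auto
        then show "(qvar::'a poly fract) ^ EA S (Suc M) = qvar ^ Suc k * qvar ^ EA S M"
          using s by (simp add: EA_Suc ra_full power_add mult.commute)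
      qed
      show ?thesis unfolding M1 sum_Sets_Suc a b ..
    qed
    moreover have h1: "(\<Sum>S\<in>Sets M k. (qvar::'a poly fract) ^ EA S M) * q_fact k * q_fact (Suc l) = q_fact M"
      using outer[of "Suc l"] unfolding M_def by simp
    moreover have h2: "(\<Sum>S\<in>Sets M (Suc k). (qvar::'a poly fract) ^ EA S M) * q_fact (Suc k) * q_fact l = q_fact M"
      using Suc.IH(1) unfolding M2[symmetric] by simp
    ultimately have "(\<Sum>S\<in>Sets (Suc k + Suc l) (Suc k). (qvar::'a poly fract) ^ EA S (Suc k + Suc l))
        * q_fact (Suc k) * q_fact (Suc l) = q_fact M * (q_int (Suc k) + qvar ^ Suc k * q_int (Suc l))"
    proof -
      define G1 where "G1 = (\<Sum>S\<in>Sets M k. (qvar::'a poly fract) ^ EA S M)"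
      define G2 where "G2 = (\<Sum>S\<in>Sets M (Suc k). (qvar::'a poly fract) ^ EA S M)"
      assume e: "(\<Sum>S\<in>Sets (Suc k + Suc l) (Suc k). (qvar::'a poly fract) ^ EA S (Suc k + Suc l))
        = G1 + qvar ^ Suc k * G2"
        and h1: "G1 * q_fact k * q_fact (Suc l) = q_fact M" and h2: "G2 * q_fact (Suc k) * q_fact l = q_fact M"
      have "(G1 + qvar ^ Suc k * G2) * q_fact (Suc k) * q_fact (Suc l)
         = (G1 * q_fact k * q_fact (Suc l)) * q_int (Suc k) + qvar ^ Suc k * (G2 * q_fact (Suc k) * q_fact l) * q_int (Suc l)"
        unfolding q_fact_Suc[of k] q_fact_Suc[of l] by (simp add: algebra_simps)
      also have "\<dots> = q_fact M * (q_int (Suc k) + qvar ^ Suc k * q_int (Suc l))"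
        unfolding h1 h2 by (simp add: algebra_simps)
      finally show ?thesis unfolding e .
    qed
    also have "\<dots> = q_fact (Suc k + Suc l)"
      unfolding q_int_add[symmetric] M1 q_fact_Suc by simp
    finally show ?case .
  qed
qed

lemma EB_full: "EB {..<N} N = 0"
  unfolding EB_def
proof (rule sum.neutral, intro ballI)
  fix i assume "i \<in> {..<N}"
  then have "{ka. ka < i \<and> ka \<notin> {..<N}} = {}" by auto
  then show "(if i \<in> {..<N} then rb {..<N} i else 0) = 0" by (simp add: rb_def)
qed

lemma GF_B: "(\<Sum>S\<in>Sets (n1+n2) n1. (qvar::'a::field poly fract) ^ EB S (n1+n2)) * q_fact n1 * q_fact n2
   = q_fact (n1+n2)"
proof (induction n1 arbitrary: n2)
  case 0
  show ?case by (simp add: Sets_0 EB_def ra_def)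
next
  case (Suc k)
  note outer = Suc.IH
  show ?case
  proof (induction n2)
    case 0
    show ?case using EB_full[of "Suc k"] by (simp add: Sets_full)
  next
    case (Suc l)
    define M where "M = k + Suc l"
    have M1: "Suc k + Suc l = Suc M" and M2: "Suc k + l = M" unfolding M_def by simp_all
    have "(\<Sum>S\<in>Sets (Suc k + Suc l) (Suc k). (qvar::'a poly fract) ^ EB S (Suc k + Suc l))
      = qvar ^ Suc l * (\<Sum>S\<in>Sets M k. qvar ^ EB S M) + (\<Sum>S\<in>Sets M (Suc k). qvar ^ EB S M)"
    proof -
      have a: "(\<Sum>S\<in>Sets M k. (qvar::'a poly fract) ^ EB (insert M S) (Suc M))
          = qvar ^ Suc l * (\<Sum>S\<in>Sets M k. qvar ^ EB S M)"
        unfolding sum_distrib_left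
      proof (rule sum.cong[OF refl])
        fix S assume "S \<in> Sets M k"
        then have s: "S \<subseteq> {..<M}" "card S = k" by (auto simp: Sets_def)
        then have "rb S M = Suc l" using rb_full[OF s(1)] unfolding M_def by simp
        then show "(qvar::'a poly fract) ^ EB (insert M S) (Suc M) = qvar ^ Suc l * qvar ^ EB S M"
          by (simp add: EB_insert power_add mult.commute)
      qed
      have b: "(\<Sum>S\<in>Sets M (Suc k). (qvar::'a poly fract) ^ EB S (Suc M))
          = (\<Sum>S\<in>Sets M (Suc k). qvar ^ EB S M)"
      proof (rule sum.cong[OF refl])
        fix S assume "S \<in> Sets M (Suc k)"
        then have "M \<notin> S" by (auto simp: Sets_def)
        then show "(qvar::'a poly fract) ^ EB S (Suc M) = qvar ^ EB S M" by (simp add: EB_Suc)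
      qed
      show ?thesis unfolding M1 sum_Sets_Suc a b ..
    qed
    moreover have h1: "(\<Sum>S\<in>Sets M k. (qvar::'a poly fract) ^ EB S M) * q_fact k * q_fact (Suc l) = q_fact M"
      using outer[of "Suc l"] unfolding M_def by simp
    moreover have h2: "(\<Sum>S\<in>Sets M (Suc k). (qvar::'a poly fract) ^ EB S M) * q_fact (Suc k) * q_fact l = q_fact M"
      using Suc.IH(1) unfolding M2[symmetric] by simp
    ultimately have "(\<Sum>S\<in>Sets (Suc k + Suc l) (Suc k). (qvar::'a poly fract) ^ EB S (Suc k + Suc l))
        * q_fact (Suc k) * q_fact (Suc l) = q_fact M * (q_int (Suc l) + qvar ^ Suc l * q_int (Suc k))"
    proof -
      define G1 where "G1 = (\<Sum>S\<in>Sets M k. (qvar::'a poly fract) ^ EB S M)"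
      define G2 where "G2 = (\<Sum>S\<in>Sets M (Suc k). (qvar::'a poly fract) ^ EB S M)"
      assume e: "(\<Sum>S\<in>Sets (Suc k + Suc l) (Suc k). (qvar::'a poly fract) ^ EB S (Suc k + Suc l))
        = qvar ^ Suc l * G1 + G2"
        and h1: "G1 * q_fact k * q_fact (Suc l) = q_fact M" and h2: "G2 * q_fact (Suc k) * q_fact l = q_fact M"
      have "(qvar ^ Suc l * G1 + G2) * q_fact (Suc k) * q_fact (Suc l)
         = qvar ^ Suc l * (G1 * q_fact k * q_fact (Suc l)) * q_int (Suc k) + (G2 * q_fact (Suc k) * q_fact l) * q_int (Suc l)"
        unfolding q_fact_Suc[of k] q_fact_Suc[of l] by (simp add: algebra_simps)
      also have "\<dots> = q_fact M * (q_int (Suc l) + qvar ^ Suc l * q_int (Suc k))"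
        unfolding h1 h2 by (simp add: algebra_simps)
      finally show ?thesis unfolding e .
    qed
    also have "\<dots> = q_fact (Suc k + Suc l)"
    proof -
      have "Suc l + Suc k = Suc M" using M1 by simp
      then show ?thesis unfolding q_int_add[symmetric] M1 q_fact_Suc by simp
    qed
    finally show ?case .
  qed
qed



lemma Fract_add1: "Fract (p + q) 1 = Fract p 1 + (Fract q 1 :: 'a::idom fract)"
  by simp
lemma Fract_mult1: "Fract (p * q) 1 = Fract p 1 * (Fract q 1 :: 'a::idom fract)"
  by simp
lemma Fract_pow1: "Fract (p ^ n) 1 = (Fract p 1 :: 'a::idom fract) ^ n"
proof (induction n)
  case 0 then show ?case by (simp add: One_fract_def)
next
  case (Suc n)
  have "Fract (p ^ Suc n) 1 = Fract p 1 * (Fract (p ^ n) 1 :: 'a fract)" by simp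
  then show ?case using Suc by simp
qed
lemma Fract_sum1: "Fract (sum f A) 1 = (\<Sum>x\<in>A. Fract (f x) 1 :: 'a::idom fract)"
proof (induction A rule: infinite_finite_induct)
  case (infinite A) then show ?case by (simp add: Zero_fract_def)
next
  case empty then show ?case by (simp add: Zero_fract_def)
next
  case (insert x F)
  have "Fract (sum f (insert x F)) 1 = Fract (f x) 1 + (Fract (sum f F) 1 :: 'a fract)"
    using insert(1,2) by simp
  then show ?case using insert by simp
qed

lemma q_int_nz: "k \<ge> 1 \<Longrightarrow> q_int k \<noteq> (0 :: 'a::field poly fract)"
proof -
  assume k: "k \<ge> 1"
  have "q_int k = (Fract (\<Sum>i<k. [:0, 1::'a:] ^ i) 1 :: 'a poly fract)"
    unfolding q_int_def qvar_def Fract_sum1 Fract_pow1 ..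
  moreover have "coeff (\<Sum>i<k. [:0, 1::'a:] ^ i) 0 = 1"
  proof -
    have "coeff (\<Sum>i<k. [:0, 1::'a:] ^ i) 0 = (\<Sum>i<k. if i = 0 then 1 else 0)"
      unfolding coeff_sum by (rule sum.cong) (auto simp: coeff_0_power)
    also have "\<dots> = 1" using k by (simp add: sum.delta)
    finally show ?thesis .
  qed
  then have "(\<Sum>i<k. [:0, 1::'a:] ^ i) \<noteq> 0" by auto
  ultimately show ?thesis by (simp add: Zero_fract_def eq_fract)
qed

lemma q_fact_nz: "q_fact n \<noteq> (0 :: 'a::field poly fract)"
  unfolding q_fact_def by (auto simp: q_int_nz)

lemma of_nat_fract_nz: "k \<noteq> 0 \<Longrightarrow> (of_nat k :: 'a::field_char_0 poly fract) \<noteq> 0"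
  by (simp add: of_nat_fract Zero_fract_def eq_fract)

lemma shuffle_sets_Sets: "shuffle_sets n1 n2 = Sets (n1 + n2) n1"
  unfolding shuffle_sets_def Sets_def ..

lemma ASMs_iff: "D \<in> ASMs \<longleftrightarrow> is_asm (fst D) (snd D)"
  unfolding ASMs_def by (cases D) auto

lemma morph_fact:
  fixes s :: "nat \<Rightarrow> mat \<Rightarrow> nat"
  assumes add: "\<And>n1 n2 d1 d2 S. is_asm n1 d1 \<Longrightarrow> is_asm n2 d2 \<Longrightarrow> S \<in> Sets (n1+n2) n1 \<Longrightarrow>
      s (n1+n2) (shuffle_mat n1 d1 d2 S) = s n1 d1 + s n2 d2"
    and z: "s 0 (\<lambda>_ _. 0) = 0"
  shows "asm_alg_morphism
            (lin_ext (\<lambda>D. (qvar :: 'a::field_char_0 poly fract) ^ (s (fst D) (snd D))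
                           / of_nat (fact (fst D))))"
proof (rule morphism_from_shuffle)
  show "(qvar :: 'a poly fract) ^ s (fst (0::nat, \<lambda>_ _. 0::int)) (snd (0::nat, \<lambda>_ _. 0::int)) / of_nat (fact (fst (0::nat, \<lambda>_ _. 0::int))) = 1"
    using z by simp
next
  fix D1 D2 :: "nat \<times> mat" assume "D1 \<in> ASMs" "D2 \<in> ASMs"
  then have a1: "is_asm (fst D1) (snd D1)" and a2: "is_asm (fst D2) (snd D2)" by (simp_all add: ASMs_iff)
  obtain n1 d1 n2 d2 where D: "D1 = (n1, d1)" "D2 = (n2, d2)" by fastforce
  have a1: "is_asm n1 d1" and a2: "is_asm n2 d2" using a1 a2 D by simp_all
  have card: "card (Sets (n1+n2) n1) = (n1 + n2) choose n1"
    unfolding Sets_def using n_subsets[of "{..<n1+n2}" n1] by simp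
  have fl: "fact n1 * fact n2 * ((n1 + n2) choose n1) = fact (n1 + n2)"
    using binomial_fact_lemma[of n1 "n1+n2"] by simp
  have nz1: "(of_nat (fact n1) :: 'a poly fract) \<noteq> 0" and nz2: "(of_nat (fact n2) :: 'a poly fract) \<noteq> 0"
    by (simp_all add: of_nat_fract_nz)
  have "(\<Sum>S\<in>Sets (n1+n2) n1. (qvar :: 'a poly fract) ^ s (n1+n2) (shuffle_mat n1 d1 d2 S) / of_nat (fact (n1+n2)))
      = (\<Sum>S\<in>Sets (n1+n2) n1. qvar ^ (s n1 d1 + s n2 d2) / of_nat (fact (n1+n2)))"
    by (rule sum.cong) (simp_all add: add a1 a2)
  also have "\<dots> = of_nat ((n1 + n2) choose n1) * (qvar ^ (s n1 d1 + s n2 d2) / of_nat (fact (n1+n2)))"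
    by (simp add: card)
  also have "\<dots> = (qvar ^ s n1 d1 / of_nat (fact n1)) * (qvar ^ s n2 d2 / of_nat (fact n2))"
  proof -
    have "(of_nat ((n1 + n2) choose n1) :: 'a poly fract) \<noteq> 0"
      by (rule of_nat_fract_nz) simp
    then show ?thesis
      unfolding fl[symmetric] using nz1 nz2 by (simp add: field_simps power_add)
  qed
  finally show "(\<Sum>S\<in>shuffle_sets (fst D1) (fst D2).
          (qvar :: 'a poly fract) ^ s (fst (shf D1 D2 S)) (snd (shf D1 D2 S)) / of_nat (fact (fst (shf D1 D2 S)))) =
       qvar ^ s (fst D1) (snd D1) / of_nat (fact (fst D1)) * (qvar ^ s (fst D2) (snd D2) / of_nat (fact (fst D2)))"
    using D by (simp add: shuffle_sets_Sets)
qed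

lemma morph_q:
  fixes s :: "nat \<Rightarrow> mat \<Rightarrow> nat" and E :: "nat set \<Rightarrow> nat \<Rightarrow> nat"
  assumes add: "\<And>n1 n2 d1 d2 S. is_asm n1 d1 \<Longrightarrow> is_asm n2 d2 \<Longrightarrow> S \<in> Sets (n1+n2) n1 \<Longrightarrow>
      s (n1+n2) (shuffle_mat n1 d1 d2 S) = s n1 d1 + s n2 d2 + E S (n1+n2)"
    and gf: "\<And>n1 n2. (\<Sum>S\<in>Sets (n1+n2) n1. (qvar::'a::field poly fract) ^ E S (n1+n2)) * q_fact n1 * q_fact n2
       = q_fact (n1+n2)"
    and z: "s 0 (\<lambda>_ _. 0) = 0"
  shows "asm_alg_morphism
            (lin_ext (\<lambda>D. (qvar :: 'a poly fract) ^ (s (fst D) (snd D)) / q_fact (fst D)))"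
proof (rule morphism_from_shuffle)
  show "(qvar :: 'a poly fract) ^ s (fst (0::nat, \<lambda>_ _. 0::int)) (snd (0::nat, \<lambda>_ _. 0::int)) / q_fact (fst (0::nat, \<lambda>_ _. 0::int)) = 1"
    using z by simp
next
  fix D1 D2 :: "nat \<times> mat" assume "D1 \<in> ASMs" "D2 \<in> ASMs"
  then have a1: "is_asm (fst D1) (snd D1)" and a2: "is_asm (fst D2) (snd D2)" by (simp_all add: ASMs_iff)
  obtain n1 d1 n2 d2 where D: "D1 = (n1, d1)" "D2 = (n2, d2)" by fastforce
  have a1: "is_asm n1 d1" and a2: "is_asm n2 d2" using a1 a2 D by simp_all
  have nz1: "q_fact n1 \<noteq> (0 :: 'a poly fract)" and nz2: "q_fact n2 \<noteq> (0 :: 'a poly fract)"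
    and nz: "q_fact (n1+n2) \<noteq> (0 :: 'a poly fract)"
    by (simp_all add: q_fact_nz)
  define G where "G = (\<Sum>S\<in>Sets (n1+n2) n1. (qvar::'a poly fract) ^ E S (n1+n2))"
  have g: "G * q_fact n1 * q_fact n2 = q_fact (n1+n2)" unfolding G_def by (rule gf)
  have "(\<Sum>S\<in>Sets (n1+n2) n1. (qvar :: 'a poly fract) ^ s (n1+n2) (shuffle_mat n1 d1 d2 S) / q_fact (n1+n2))
      = (\<Sum>S\<in>Sets (n1+n2) n1. qvar ^ (s n1 d1 + s n2 d2) * qvar ^ E S (n1+n2) / q_fact (n1+n2))"
    by (rule sum.cong) (simp_all add: add a1 a2 power_add)
  also have "\<dots> = qvar ^ (s n1 d1 + s n2 d2) * G / q_fact (n1+n2)"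
    unfolding G_def by (simp add: sum_distrib_left sum_divide_distrib)
  also have "\<dots> = (qvar ^ s n1 d1 / q_fact n1) * (qvar ^ s n2 d2 / q_fact n2)"
  proof -
    have "G \<noteq> 0" using g nz by auto
    then show ?thesis
      unfolding g[symmetric] using nz1 nz2 by (simp add: field_simps power_add)
  qed
  finally show "(\<Sum>S\<in>shuffle_sets (fst D1) (fst D2).
          (qvar :: 'a poly fract) ^ s (fst (shf D1 D2 S)) (snd (shf D1 D2 S)) / q_fact (fst (shf D1 D2 S))) =
       qvar ^ s (fst D1) (snd D1) / q_fact (fst D1) * (qvar ^ s (fst D2) (snd D2) / q_fact (fst D2))"
    using D by (simp add: shuffle_sets_Sets)
qed



lemma ra_le: "S \<in> Sets (n1+n2) n1 \<Longrightarrow> i < n1 + n2 \<Longrightarrow> ra S i \<le> n1"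
  using ra_mono[of i "n1+n2" S] ra_full[of S "n1+n2"] by (auto simp: Sets_def)
lemma rb_le: "S \<in> Sets (n1+n2) n1 \<Longrightarrow> i < n1 + n2 \<Longrightarrow> rb S i \<le> n2"
  using rb_mono[of i "n1+n2" S] rb_full[of S "n1+n2"] by (auto simp: Sets_def)

lemma Sets_D: "S \<in> Sets (n1+n2) n1 \<Longrightarrow> S \<subseteq> {..<n1+n2} \<and> card S = n1"
  by (simp add: Sets_def)

lemma oi_add: "is_asm n1 d1 \<Longrightarrow> is_asm n2 d2 \<Longrightarrow> S \<in> Sets (n1+n2) n1 \<Longrightarrow>
   asm_oi (n1+n2) (shuffle_mat n1 d1 d2 S) = asm_oi n1 d1 + asm_oi n2 d2"
  unfolding stat_defs using Sets_D by (subst stp_shuffle) auto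

lemma io_add: "is_asm n1 d1 \<Longrightarrow> is_asm n2 d2 \<Longrightarrow> S \<in> Sets (n1+n2) n1 \<Longrightarrow>
   asm_io (n1+n2) (shuffle_mat n1 d1 d2 S) = asm_io n1 d1 + asm_io n2 d2"
  unfolding stat_defs using Sets_D by (subst stp_shuffle) auto

lemma ne_add:
  assumes A: "is_asm n1 d1" "is_asm n2 d2" and S: "S \<in> Sets (n1+n2) n1"
  shows "asm_ne (n1+n2) (shuffle_mat n1 d1 d2 S) = asm_ne n1 d1 + asm_ne n2 d2 + EB S (n1+n2)"
proof -
  have s: "S \<subseteq> {..<n1+n2}" "card S = n1" using Sets_D[OF S] by auto
  have "(\<Sum>i<n1+n2. if i \<in> S then (\<Sum>j<n2. if (0::int) = 0 \<and> (1::int) = 0 \<and> col_pre d2 (rb S i) j = 0 then 1 else 0)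
                   else (\<Sum>j<n1. if (0::int) = 0 \<and> (0::int) = 0 \<and> col_pre d1 (ra S i) j = 0 then 1 else 0))
     = (\<Sum>i<n1+n2. if i \<in> S then 0 else ra S (n1+n2) - ra S i)"
    by (rule sum.cong) (auto simp: asm_count_col1(2)[OF A(1)] ra_le[OF S] ra_full[OF s(1)] s(2))
  also have "\<dots> = EB S (n1+n2)" by (rule L1)
  finally show ?thesis unfolding asm_ne_def stat_defs
    by (subst stp_shuffle[OF s A]) simp
qed

lemma nw_add:
  assumes A: "is_asm n1 d1" "is_asm n2 d2" and S: "S \<in> Sets (n1+n2) n1"
  shows "asm_nw (n1+n2) (shuffle_mat n1 d1 d2 S) = asm_nw n1 d1 + asm_nw n2 d2 + EA S (n1+n2)"
proof -
  have s: "S \<subseteq> {..<n1+n2}" "card S = n1" using Sets_D[OF S] by auto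
  have "(\<Sum>i<n1+n2. if i \<in> S then (\<Sum>j<n2. if (0::int) = 0 \<and> (1::int) = 1 \<and> col_pre d2 (rb S i) j = 0 then 1 else 0)
                   else (\<Sum>j<n1. if (0::int) = 0 \<and> (0::int) = 1 \<and> col_pre d1 (ra S i) j = 0 then 1 else 0))
     = (\<Sum>i<n1+n2. if i \<in> S then rb S (n1+n2) - rb S i else 0)"
    by (rule sum.cong) (auto simp: asm_count_col1(2)[OF A(2)] rb_le[OF S] rb_full[OF s(1)] s(2))
  also have "\<dots> = EA S (n1+n2)" by (rule L2)
  finally show ?thesis unfolding asm_nw_def stat_defs
    by (subst stp_shuffle[OF s A]) simp
qed

lemma se_add:
  assumes A: "is_asm n1 d1" "is_asm n2 d2" and S: "S \<in> Sets (n1+n2) n1"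
  shows "asm_se (n1+n2) (shuffle_mat n1 d1 d2 S) = asm_se n1 d1 + asm_se n2 d2 + EA S (n1+n2)"
proof -
  have s: "S \<subseteq> {..<n1+n2}" "card S = n1" using Sets_D[OF S] by auto
  have "(\<Sum>i<n1+n2. if i \<in> S then (\<Sum>j<n2. if (0::int) = 0 \<and> (1::int) = 0 \<and> col_pre d2 (rb S i) j = 1 then 1 else 0)
                   else (\<Sum>j<n1. if (0::int) = 0 \<and> (0::int) = 0 \<and> col_pre d1 (ra S i) j = 1 then 1 else 0))
     = EA S (n1+n2)"
    unfolding EA_def
    by (rule sum.cong) (auto simp: asm_count_col1(1)[OF A(1)] ra_le[OF S])
  then show ?thesis unfolding asm_se_def stat_defs
    by (subst stp_shuffle[OF s A]) simp
qed

lemma sw_add: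
  assumes A: "is_asm n1 d1" "is_asm n2 d2" and S: "S \<in> Sets (n1+n2) n1"
  shows "asm_sw (n1+n2) (shuffle_mat n1 d1 d2 S) = asm_sw n1 d1 + asm_sw n2 d2 + EB S (n1+n2)"
proof -
  have s: "S \<subseteq> {..<n1+n2}" "card S = n1" using Sets_D[OF S] by auto
  have "(\<Sum>i<n1+n2. if i \<in> S then (\<Sum>j<n2. if (0::int) = 0 \<and> (1::int) = 1 \<and> col_pre d2 (rb S i) j = 1 then 1 else 0)
                   else (\<Sum>j<n1. if (0::int) = 0 \<and> (0::int) = 1 \<and> col_pre d1 (ra S i) j = 1 then 1 else 0))
     = EB S (n1+n2)"
    unfolding EB_def
    by (rule sum.cong) (auto simp: asm_count_col1(1)[OF A(2)] rb_le[OF S])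
  then show ?thesis unfolding asm_sw_def stat_defs
    by (subst stp_shuffle[OF s A]) simp
qed

lemma zero_stats:
  "asm_oi 0 (\<lambda>_ _. 0) = 0" "asm_io 0 (\<lambda>_ _. 0) = 0"
  "asm_ne 0 (\<lambda>_ _. 0) = 0" "asm_nw 0 (\<lambda>_ _. 0) = 0"
  "asm_se 0 (\<lambda>_ _. 0) = 0" "asm_sw 0 (\<lambda>_ _. 0) = 0"
  by (simp_all add: asm_oi_def asm_io_def asm_ne_def asm_nw_def asm_se_def asm_sw_def zero_type_def)

theorem proposition4p5:
  shows "(\<forall>s\<in>{asm_io, asm_oi}. asm_alg_morphism
            (lin_ext (\<lambda>D. (qvar :: 'a::field_char_0 poly fract) ^ (s (fst D) (snd D))
                           / of_nat (fact (fst D)))))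
       \<and> (\<forall>s\<in>{asm_se, asm_nw, asm_sw, asm_ne}. asm_alg_morphism
            (lin_ext (\<lambda>D. (qvar :: 'a poly fract) ^ (s (fst D) (snd D))
                           / q_fact (fst D))))"
proof (intro conjI ballI)
  fix s assume "s \<in> {asm_io, asm_oi}"
  then show "asm_alg_morphism
            (lin_ext (\<lambda>D. (qvar :: 'a::field_char_0 poly fract) ^ (s (fst D) (snd D))
                           / of_nat (fact (fst D))))"
    by (auto intro!: morph_fact simp: io_add oi_add zero_stats)
next
  fix s assume "s \<in> {asm_se, asm_nw, asm_sw, asm_ne}"
  then show "asm_alg_morphism
            (lin_ext (\<lambda>D. (qvar :: 'a poly fract) ^ (s (fst D) (snd D)) / q_fact (fst D)))"
    apply (elim insertE emptyE)
    apply (rule morph_q[where E=EA]; simp add: se_add GF_A zero_stats)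
    apply (rule morph_q[where E=EA]; simp add: nw_add GF_A zero_stats)
    apply (rule morph_q[where E=EB]; simp add: sw_add GF_B zero_stats)
    apply (rule morph_q[where E=EB]; simp add: ne_add GF_B zero_stats)
    done
qed

end
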